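(* If a queuing regime $R=(\mathcal{X},\alpha,\xi,(\rho_i)_i,\pi)$ is universally optimal, then there exists a non-idle state $x$ at which preemption occurs, i.e., $\pi(x)=1$.
   Context: Model: an M/M/1 queue with a single server; customers arrive according to a Poisson process with rate $\lambda>0$ and are served at exponential rate $\mu>0$. Each customer incurs cost at rate $c>0$ while in the system and receives reward $r>0$ upon service completion; a customer who reneges gets no reward. Queuing regime: a tuple $(\mathcal{X},\alpha,\xi,(\rho_i)_i,\pi)$ where $\mathcal{X}=\mathcal{X}_0\uplus\mathcal{X}_1\uplus\cdots$ is a set of states partitioned by the number of customers in the system ($\mathcal{X}_0$ is a singleton, the idle state), and $n(x)=n$ for $x\in\mathcal{X}_n$. Customers present are ranked in a queue: position $1$ is being served (work-conserving) and position $n$ is last. If at state $x\in\mathcal{X}_n$ a customer arrives, the arriving customer is placed at position $\pi(x)\in\{1,\dots,n+1\}$ and the state becomes $\alpha(x)\in\mathcal{X}_{n+1}$. If at $x\in\mathcal{X}_n$, $n\ge1$, service is completed, the state becomes $\xi(x)\in\mathcal{X}_{n-1}$. If at $x\in\mathcal{X}_n$ the customer at position $i$ reneges, the state becomes $\rho_i(x)\in\mathcal{X}_{n-1}$. Events do not change the relative order of remaining customers, and $\rho_i(\rho_j(x))=\rho_{j-1}(\rho_i(x))$ for $i<j$, so simultaneous reneging of a set of positions is well defined. Strategies and equilibrium: a Markov strategy profile is a function $\sigma$ on non-idle states with $\sigma(x)\subseteq\{1,\dots,n(x)\}$, the positions of customers who renege simultaneously when the system reaches $x$. It is a Markov perfect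 equilibrium if for every state $x$ it is a Nash equilibrium of the game starting at $x$ in which each customer decides whether to stay or renege. Social optimum: the designer maximizes long-run average welfare (reward $r$ per service minus cost $c$ per unit time per customer present); the optimal policy keeps at most $n^*(\lambda,\mu,c,r)$ customers. A profile $\sigma$ induces the socially optimal behavior if $|\sigma(x)|=\max(n(x)-n^*,0)$ for all non-idle $x$. A regime is universally optimal if for every parameters $(\lambda,\mu,c,r)$ the game admits a Markov perfect equilibrium inducing the socially optimal behavior. *)

theory Defs
  imports Complex_Main "HOL-Library.Extended_Nonnegative_Real" "HOL-Library.Extended_Real"
begin

(* States are the elements of the type 'x; nn x is the number
   of customers in state x.  alpha = arrival, xi = service completion,
   rho i = reneging of the customer at position i, pos = position of an arriving
   customer.  Positions are 1-based. *)
definition queuing_regime ::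
  "('x \<Rightarrow> nat) \<Rightarrow> ('x \<Rightarrow> 'x) \<Rightarrow> ('x \<Rightarrow> 'x) \<Rightarrow> (nat \<Rightarrow> 'x \<Rightarrow> 'x) \<Rightarrow> ('x \<Rightarrow> nat) \<Rightarrow> bool" where
  "queuing_regime nn alpha xi rho pos \<longleftrightarrow>
     (\<exists>!x. nn x = 0) \<and>
     (\<forall>x. nn (alpha x) = Suc (nn x) \<and> 1 \<le> pos x \<and> pos x \<le> Suc (nn x)) \<and>
     (\<forall>x. 1 \<le> nn x \<longrightarrow> nn (xi x) = nn x - 1) \<and>
     (\<forall>x i. 1 \<le> i \<and> i \<le> nn x \<longrightarrow> nn (rho i x) = nn x - 1) \<and>
     (\<forall>x i j. 1 \<le> i \<and> i < j \<and> j \<le> nn x \<longrightarrow> rho i (rho j x) = rho (j - 1) (rho i x))"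

(* simultaneous reneging of the set S of positions: remove from the highest position down *)
definition rho_set :: "(nat \<Rightarrow> 'x \<Rightarrow> 'x) \<Rightarrow> nat set \<Rightarrow> 'x \<Rightarrow> 'x" where
  "rho_set rho S x = fold rho (rev (sorted_list_of_set S)) x"

definition new_pos :: "nat set \<Rightarrow> nat \<Rightarrow> nat" where
  "new_pos S i = i - card {k \<in> S. k < i}"

definition pos_after_arrival :: "('x \<Rightarrow> nat) \<Rightarrow> 'x \<Rightarrow> nat \<Rightarrow> nat" where
  "pos_after_arrival pos x i = (if pos x \<le> i then Suc i else i)"

(* Markov strategy profile: sigma x = positions reneging when x is reached *)
definition markov_strategy :: "('x \<Rightarrow> nat) \<Rightarrow> ('x \<Rightarrow> nat set) \<Rightarrow> bool" where
  "markov_strategy nn \<sigma> \<longleftrightarrow> (\<forall>x. \<sigma> x \<subseteq> {1..nn x})"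

(* configuration of a tagged customer after all (cascading) reneging has been resolved *)
datatype 'x config = Flow 'x nat | Gone

fun resolve_fuel :: "nat \<Rightarrow> ('x \<Rightarrow> nat set) \<Rightarrow> (nat \<Rightarrow> 'x \<Rightarrow> 'x) \<Rightarrow> 'x \<Rightarrow> nat \<Rightarrow> 'x config" where
  "resolve_fuel 0 \<sigma> rho z k = Gone"
| "resolve_fuel (Suc f) \<sigma> rho z k =
     (if k \<in> \<sigma> z then Gone
      else if \<sigma> z = {} then Flow z k
      else resolve_fuel f \<sigma> rho (rho_set rho (\<sigma> z) z) (new_pos (\<sigma> z) k))"

(* the system reaches state z with the tagged customer at position k *)
definition resolve :: "('x \<Rightarrow> nat) \<Rightarrow> ('x \<Rightarrow> nat set) \<Rightarrow> (nat \<Rightarrow> 'x \<Rightarrow> 'x) \<Rightarrow> 'x \<Rightarrow> nat \<Rightarrow> 'x config" where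
  "resolve nn \<sigma> rho z k = resolve_fuel (Suc (nn z)) \<sigma> rho z k"

definition cval :: "('x \<Rightarrow> nat \<Rightarrow> ennreal) \<Rightarrow> 'x config \<Rightarrow> ennreal" where
  "cval f c = (case c of Flow y j \<Rightarrow> f y j | Gone \<Rightarrow> 0)"

(* Bellman operators of the embedded jump chain; their least fixed points are the
   probability of eventually being served and the expected sojourn time *)
definition served_op ::
  "real \<Rightarrow> real \<Rightarrow> ('x \<Rightarrow> nat) \<Rightarrow> ('x \<Rightarrow> 'x) \<Rightarrow> ('x \<Rightarrow> 'x) \<Rightarrow> (nat \<Rightarrow> 'x \<Rightarrow> 'x) \<Rightarrow> ('x \<Rightarrow> nat)
   \<Rightarrow> ('x \<Rightarrow> nat set) \<Rightarrow> ('x \<Rightarrow> nat \<Rightarrow> ennreal) \<Rightarrow> ('x \<Rightarrow> nat \<Rightarrow> ennreal)" where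
  "served_op la mu nn alpha xi rho pos \<sigma> f = (\<lambda>x i.
     ennreal (la / (la + mu)) * cval f (resolve nn \<sigma> rho (alpha x) (pos_after_arrival pos x i))
   + ennreal (mu / (la + mu)) * (if i = 1 then 1 else cval f (resolve nn \<sigma> rho (xi x) (i - 1))))"

definition time_op ::
  "real \<Rightarrow> real \<Rightarrow> ('x \<Rightarrow> nat) \<Rightarrow> ('x \<Rightarrow> 'x) \<Rightarrow> ('x \<Rightarrow> 'x) \<Rightarrow> (nat \<Rightarrow> 'x \<Rightarrow> 'x) \<Rightarrow> ('x \<Rightarrow> nat)
   \<Rightarrow> ('x \<Rightarrow> nat set) \<Rightarrow> ('x \<Rightarrow> nat \<Rightarrow> ennreal) \<Rightarrow> ('x \<Rightarrow> nat \<Rightarrow> ennreal)" where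
  "time_op la mu nn alpha xi rho pos \<sigma> f = (\<lambda>x i.
     ennreal (1 / (la + mu))
   + ennreal (la / (la + mu)) * cval f (resolve nn \<sigma> rho (alpha x) (pos_after_arrival pos x i))
   + ennreal (mu / (la + mu)) * (if i = 1 then 0 else cval f (resolve nn \<sigma> rho (xi x) (i - 1))))"

(* expected payoff of a customer at position i of state x, after reneging at x
   has been resolved, when everybody follows sigma from then on *)
definition flow_payoff ::
  "real \<Rightarrow> real \<Rightarrow> real \<Rightarrow> real \<Rightarrow> ('x \<Rightarrow> nat) \<Rightarrow> ('x \<Rightarrow> 'x) \<Rightarrow> ('x \<Rightarrow> 'x) \<Rightarrow> (nat \<Rightarrow> 'x \<Rightarrow> 'x)
   \<Rightarrow> ('x \<Rightarrow> nat) \<Rightarrow> ('x \<Rightarrow> nat set) \<Rightarrow> 'x \<Rightarrow> nat \<Rightarrow> ereal" where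
  "flow_payoff la mu c r nn alpha xi rho pos \<sigma> x i =
     ereal r * enn2ereal (lfp (served_op la mu nn alpha xi rho pos \<sigma>) x i)
   - ereal c * enn2ereal (lfp (time_op la mu nn alpha xi rho pos \<sigma>) x i)"

(* payoff of customer at position i of state x (just reached) if she stays while
   the others follow sigma x *)
definition stay_payoff ::
  "real \<Rightarrow> real \<Rightarrow> real \<Rightarrow> real \<Rightarrow> ('x \<Rightarrow> nat) \<Rightarrow> ('x \<Rightarrow> 'x) \<Rightarrow> ('x \<Rightarrow> 'x) \<Rightarrow> (nat \<Rightarrow> 'x \<Rightarrow> 'x)
   \<Rightarrow> ('x \<Rightarrow> nat) \<Rightarrow> ('x \<Rightarrow> nat set) \<Rightarrow> 'x \<Rightarrow> nat \<Rightarrow> ereal" where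
  "stay_payoff la mu c r nn alpha xi rho pos \<sigma> x i =
     (let S = \<sigma> x - {i} in
      if S = {} then flow_payoff la mu c r nn alpha xi rho pos \<sigma> x i
      else (case resolve nn \<sigma> rho (rho_set rho S x) (new_pos S i) of
              Flow y j \<Rightarrow> flow_payoff la mu c r nn alpha xi rho pos \<sigma> y j
            | Gone \<Rightarrow> 0))"

(* Markov perfect equilibrium: at every state, sigma x is a Nash equilibrium of the
   stay/renege game (reneging yields 0) *)
definition markov_perfect_eq ::
  "real \<Rightarrow> real \<Rightarrow> real \<Rightarrow> real \<Rightarrow> ('x \<Rightarrow> nat) \<Rightarrow> ('x \<Rightarrow> 'x) \<Rightarrow> ('x \<Rightarrow> 'x) \<Rightarrow> (nat \<Rightarrow> 'x \<Rightarrow> 'x)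
   \<Rightarrow> ('x \<Rightarrow> nat) \<Rightarrow> ('x \<Rightarrow> nat set) \<Rightarrow> bool" where
  "markov_perfect_eq la mu c r nn alpha xi rho pos \<sigma> \<longleftrightarrow>
     markov_strategy nn \<sigma> \<and>
     (\<forall>x. \<forall>i \<in> {1..nn x}.
        (i \<in> \<sigma> x \<longrightarrow> stay_payoff la mu c r nn alpha xi rho pos \<sigma> x i \<le> 0) \<and>
        (i \<notin> \<sigma> x \<longrightarrow> stay_payoff la mu c r nn alpha xi rho pos \<sigma> x i \<ge> 0))"

(* long-run average welfare of keeping at most N customers (M/M/1/N) *)
definition welfare :: "real \<Rightarrow> real \<Rightarrow> real \<Rightarrow> real \<Rightarrow> nat \<Rightarrow> real" where
  "welfare la mu c r N =
     (let q = la / mu in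
      (r * mu * (\<Sum>k=1..N. q ^ k) - c * (\<Sum>k=0..N. real k * q ^ k)) / (\<Sum>k=0..N. q ^ k))"

definition n_star :: "real \<Rightarrow> real \<Rightarrow> real \<Rightarrow> real \<Rightarrow> nat" where
  "n_star la mu c r = (LEAST N. \<forall>M. welfare la mu c r M \<le> welfare la mu c r N)"

definition universally_optimal ::
  "('x \<Rightarrow> nat) \<Rightarrow> ('x \<Rightarrow> 'x) \<Rightarrow> ('x \<Rightarrow> 'x) \<Rightarrow> (nat \<Rightarrow> 'x \<Rightarrow> 'x) \<Rightarrow> ('x \<Rightarrow> nat) \<Rightarrow> bool" where
  "universally_optimal nn alpha xi rho pos \<longleftrightarrow>
     (\<forall>la mu c r. la > 0 \<and> mu > 0 \<and> c > 0 \<and> r > 0 \<longrightarrow>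
        (\<exists>\<sigma>. markov_perfect_eq la mu c r nn alpha xi rho pos \<sigma> \<and>
             (\<forall>x. 1 \<le> nn x \<longrightarrow> card (\<sigma> x) = nn x - n_star la mu c r)))"

end

theory Submission
  imports Defs
begin

locale npq =
  fixes nn :: "'x \<Rightarrow> nat" and alpha xi :: "'x \<Rightarrow> 'x" and rho :: "nat \<Rightarrow> 'x \<Rightarrow> 'x"
    and pos :: "'x \<Rightarrow> nat" and \<sigma> :: "'x \<Rightarrow> nat set"
  assumes qr: "queuing_regime nn alpha xi rho pos"
    and np: "\<And>x. 1 \<le> nn x \<Longrightarrow> pos x \<noteq> 1"
    and ms: "\<And>x. \<sigma> x \<subseteq> {1..nn x}"
begin

lemma nn_alpha: "nn (alpha x) = Suc (nn x)" and pos_ge: "1 \<le> pos x"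
  using qr unfolding queuing_regime_def by auto

lemma nn_xi: "1 \<le> nn x \<Longrightarrow> nn (xi x) = nn x - 1"
  using qr unfolding queuing_regime_def by auto

lemma nn_rho: "1 \<le> i \<Longrightarrow> i \<le> nn x \<Longrightarrow> nn (rho i x) = nn x - 1"
  using qr unfolding queuing_regime_def by auto

lemma pos2: "1 \<le> nn x \<Longrightarrow> 2 \<le> pos x"
  using np[of x] pos_ge[of x] by linarith

lemma rho_set_Min:
  assumes "finite S" "S \<noteq> {}"
  shows "rho_set rho S x = rho (Min S) (rho_set rho (S - {Min S}) x)"
  using assms unfolding rho_set_def
  by (simp add: sorted_list_of_set_nonempty[of S])

lemma rho_set_nn:
  "finite S \<Longrightarrow> S \<subseteq> {1..nn x} \<Longrightarrow> nn (rho_set rho S x) = nn x - card S"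
proof (induction "card S" arbitrary: S)
  case 0
  then show ?case by (simp add: rho_set_def)
next
  case (Suc n)
  then have ne: "S \<noteq> {}" by auto
  define m where "m = Min S"
  have mS: "m \<in> S" using Suc ne m_def by auto
  have IH: "nn (rho_set rho (S - {m}) x) = nn x - card (S - {m})"
    using Suc mS by (intro Suc.hyps) auto
  have cS: "card (S - {m}) = n" using Suc mS by auto
  have "S \<subseteq> {m..nn x}" using Suc m_def by auto
  then have "card S \<le> card {m..nn x}" by (intro card_mono) auto
  then have "Suc n \<le> nn x + 1 - m" using Suc by simp
  moreover have "1 \<le> m" using mS Suc by auto
  ultimately have "nn (rho m (rho_set rho (S - {m}) x)) = nn x - n - 1"
    using IH cS by (subst nn_rho) auto
  then show ?case using rho_set_Min[OF Suc(3) ne] m_def Suc by simp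
qed

lemma new_pos_1: "S \<subseteq> {1..k} \<Longrightarrow> new_pos S 1 = 1"
  unfolding new_pos_def
proof -
  assume "S \<subseteq> {1..k}"
  then have "{j \<in> S. j < 1} = {}" by auto
  then have "card {j \<in> S. j < 1} = 0" by (simp only: card.empty)
  then show "1 - card {j \<in> S. j < 1} = 1" by linarith
qed

lemma resolve_1:
  "1 \<le> nn z \<Longrightarrow> resolve_fuel f \<sigma> rho z 1 = Gone \<or> (\<exists>w. resolve_fuel f \<sigma> rho z 1 = Flow w 1 \<and> 1 \<le> nn w)"
proof (induction f arbitrary: z)
  case 0
  then show ?case by simp
next
  case (Suc f)
  show ?case
  proof (cases "1 \<in> \<sigma> z \<or> \<sigma> z = {}")
    case True
    then show ?thesis using Suc by auto
  next
    case False
    have sub: "\<sigma> z \<subseteq> {2..nn z}"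
    proof
      fix k assume k: "k \<in> \<sigma> z"
      then have "k \<in> {1..nn z}" using ms[of z] by blast
      moreover have "k \<noteq> 1" using False k by auto
      ultimately show "k \<in> {2..nn z}" by auto
    qed
    then have "card (\<sigma> z) \<le> card {2..nn z}" by (intro card_mono) auto
    then have "card (\<sigma> z) \<le> nn z - 1" by simp
    moreover have "nn (rho_set rho (\<sigma> z) z) = nn z - card (\<sigma> z)"
      using ms[of z] by (intro rho_set_nn) (auto intro: finite_subset)
    ultimately have "1 \<le> nn (rho_set rho (\<sigma> z) z)" using False Suc.prems by auto
    moreover have "new_pos (\<sigma> z) 1 = 1" using ms[of z] by (rule new_pos_1)
    ultimately show ?thesis using False Suc.IH by auto
  qed
qed


abbreviation "Sop \<equiv> served_op 1 1 nn alpha xi rho pos \<sigma>"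
abbreviation "Top \<equiv> time_op 1 1 nn alpha xi rho pos \<sigma>"
abbreviation "sv \<equiv> lfp Sop"
abbreviation "tv \<equiv> lfp Top"

lemma half_half: "ennreal (1/2) + ennreal (1/2) = 1"
  by (subst ennreal_plus[symmetric]) auto

lemma cval_mono: "f \<le> g \<Longrightarrow> cval f c \<le> cval g c"
  unfolding cval_def by (cases c) (auto simp: le_fun_def)

lemma mono_S: "mono Sop"
  unfolding served_op_def
  by (intro monoI le_funI add_mono mult_left_mono cval_mono) (auto simp: le_fun_def intro: cval_mono)

lemma mono_T: "mono Top"
  unfolding time_op_def
  by (intro monoI le_funI add_mono mult_left_mono cval_mono order_refl) (auto simp: le_fun_def intro: cval_mono)

lemma sv_unfold: "sv x i = Sop sv x i"
  using lfp_unfold[OF mono_S] by metis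

lemma tv_unfold: "tv x i = Top tv x i"
  using lfp_unfold[OF mono_T] by metis

lemma sv_eq: "sv x i = ennreal (1/2) * cval sv (resolve nn \<sigma> rho (alpha x) (pos_after_arrival pos x i))
   + ennreal (1/2) * (if i = 1 then 1 else cval sv (resolve nn \<sigma> rho (xi x) (i - 1)))"
  by (subst sv_unfold) (simp add: served_op_def)

lemma tv_eq: "tv x i = ennreal (1/2) + ennreal (1/2) * cval tv (resolve nn \<sigma> rho (alpha x) (pos_after_arrival pos x i))
   + ennreal (1/2) * (if i = 1 then 0 else cval tv (resolve nn \<sigma> rho (xi x) (i - 1)))"
  by (subst tv_unfold) (simp add: time_op_def)

lemma sv_le1: "sv x i \<le> 1"
proof -
  have "sv \<le> (\<lambda>_ _. 1)"
  proof (rule lfp_lowerbound, rule le_funI, rule le_funI)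
    fix x i
    have c: "cval (\<lambda>_ _. 1) c \<le> 1" for c unfolding cval_def by (cases c) auto
    have "Sop (\<lambda>_ _. 1) x i \<le> ennreal (1/2) * 1 + ennreal (1/2) * 1"
      unfolding served_op_def
      apply (simp only: one_add_one)
      apply (intro add_mono mult_left_mono)
      using c by auto
    also have "\<dots> = 1" by (simp only: mult_1_right half_half)
    finally show "Sop (\<lambda>_ _. 1) x i \<le> 1" .
  qed
  then show ?thesis by (simp add: le_fun_def)
qed

lemma sv_ge: "ennreal (1/2) \<le> sv x 1"
  by (subst sv_eq) simp


lemma pa1: "1 \<le> nn x \<Longrightarrow> pos_after_arrival pos x 1 = 1"
  using pos2[of x] unfolding pos_after_arrival_def by auto

lemma tv_le_sv: assumes x1: "1 \<le> nn x" shows "tv x 1 \<le> sv x 1"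
proof -
  define g where "g = (\<lambda>x (i::nat). if i = 1 \<and> 1 \<le> nn x then sv x 1 else (top::ennreal))"
  have "tv \<le> g"
  proof (rule lfp_lowerbound, rule le_funI, rule le_funI)
    fix y i
    show "Top g y i \<le> g y i"
    proof (cases "i = 1 \<and> 1 \<le> nn y")
      case False
      then have "g y i = top" unfolding g_def by auto
      then show ?thesis by simp
    next
      case True
      define R where "R = resolve nn \<sigma> rho (alpha y) 1"
      have "R = Gone \<or> (\<exists>w. R = Flow w 1 \<and> 1 \<le> nn w)"
        unfolding R_def resolve_def by (rule resolve_1) (simp add: nn_alpha)
      then have cg: "cval g R = cval sv R"
        by (auto simp: cval_def g_def)
      have "Top g y i = ennreal (1/2) + ennreal (1/2) * cval g R"
        using True pa1[of y] unfolding time_op_def R_def by simp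
      also have "\<dots> = ennreal (1/2) + ennreal (1/2) * cval sv R" using cg by simp
      also have "\<dots> = sv y 1"
        using True pa1[of y] by (subst sv_eq) (simp add: R_def add.commute)
      finally show ?thesis using True by (simp add: g_def)
    qed
  qed
  then have "tv x 1 \<le> g x 1" by (simp add: le_fun_def)
  then show ?thesis using x1 by (simp add: g_def)
qed


abbreviation "fl \<equiv> flow_payoff 1 1 1 3 nn alpha xi rho pos \<sigma>"
abbreviation "st \<equiv> stay_payoff 1 1 1 3 nn alpha xi rho pos \<sigma>"

lemma fl_val: "sv x i = ennreal a \<Longrightarrow> tv x i = ennreal b \<Longrightarrow> 0 \<le> a \<Longrightarrow> 0 \<le> b
  \<Longrightarrow> fl x i = ereal (3 * a - b)"
  unfolding flow_payoff_def by simp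

lemma sv_real: "sv x i = ennreal (enn2real (sv x i))"
  using sv_le1[of x i] by (simp add: ennreal_enn2real_if top_unique) (metis ennreal_enn2real_if ennreal_one_less_top leD top.not_eq_extremum)

lemma fl_pos1: assumes "1 \<le> nn x" shows "fl x 1 > 0"
proof -
  define a where "a = enn2real (sv x 1)"
  define b where "b = enn2real (tv x 1)"
  have sa: "sv x 1 = ennreal a" using sv_real a_def by simp
  have tle: "tv x 1 \<le> ennreal a" using tv_le_sv[OF assms] sa by simp
  then have tb: "tv x 1 = ennreal b" unfolding b_def
    by (metis ennreal_enn2real_if ennreal_less_top leD top.not_eq_extremum top_greatest order.trans)
  have a0: "0 \<le> a" "0 \<le> b" unfolding a_def b_def by auto
  have "b \<le> a" using tle tb a0 by (simp add: ennreal_le_iff)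
  moreover have "ennreal (1/2) \<le> ennreal a" using sv_ge[of x] sa by (simp only:)
  then have "1/2 \<le> a" using a0 by (subst (asm) ennreal_le_iff) auto
  ultimately show ?thesis using fl_val[OF sa tb a0] by simp
qed

end
locale npq2 = npq +
  assumes mpe: "markov_perfect_eq 1 1 1 3 nn alpha xi rho pos \<sigma>"
    and crd: "\<And>x. 1 \<le> nn x \<Longrightarrow> card (\<sigma> x) = nn x - 1"
begin

lemma eq_in: "i \<in> \<sigma> x \<Longrightarrow> st x i \<le> 0"
  using mpe ms[of x] unfolding markov_perfect_eq_def by blast

lemma eq_out: "1 \<le> i \<Longrightarrow> i \<le> nn x \<Longrightarrow> i \<notin> \<sigma> x \<Longrightarrow> st x i \<ge> 0"
  using mpe unfolding markov_perfect_eq_def by auto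

lemma fin: "finite (\<sigma> x)"
  using ms[of x] by (rule finite_subset) auto

lemma s1: "nn x = 1 \<Longrightarrow> \<sigma> x = {}"
  using crd[of x] fin[of x] by auto

lemma s2: assumes "nn z = 2" shows "\<sigma> z = {2}"
proof -
  have "card (\<sigma> z) = 1" using crd[of z] assms by simp
  then obtain k where k: "\<sigma> z = {k}" by (auto simp: card_Suc_eq)
  have "k \<in> {1..2}" using ms[of z] k assms by auto
  moreover have "k \<noteq> 1"
  proof
    assume "k = 1"
    then have "st z 1 = fl z 1" using k by (simp add: stay_payoff_def)
    moreover have "fl z 1 > 0" using fl_pos1 assms by simp
    moreover have "st z 1 \<le> 0" using eq_in k \<open>k = 1\<close> by simp
    ultimately show False by simp
  qed
  ultimately have "k = 2" by auto
  then show ?thesis using k by simp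
qed

lemma res2: assumes "nn z = 2" shows "resolve nn \<sigma> rho z 1 = Flow (rho 2 z) 1"
proof -
  have n1: "nn (rho 2 z) = 1" using nn_rho[of 2 z] assms by simp
  have "resolve nn \<sigma> rho z 1 = resolve_fuel (Suc (Suc (Suc 0))) \<sigma> rho z 1"
    unfolding resolve_def using assms by (simp add: numeral_eq_Suc)
  also have "\<dots> = resolve_fuel (Suc (Suc 0)) \<sigma> rho (rho 2 z) 1"
  proof -
    have np1: "new_pos {2} 1 = 1" by (rule new_pos_1[of _ 2]) auto
    have rs: "rho_set rho {2} z = rho 2 z" by (simp add: rho_set_def)
    show ?thesis using s2[OF assms] np1 rs by (subst resolve_fuel.simps(2)) (simp del: resolve_fuel.simps)
  qed
  also have "\<dots> = Flow (rho 2 z) 1"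
    using s1[OF n1] by simp
  finally show ?thesis .
qed


lemma s3: assumes "nn z = 3" shows "\<sigma> z = {2,3}"
proof -
  have c2: "card (\<sigma> z) = 2" using crd[of z] assms by simp
  have n1: "1 \<notin> \<sigma> z"
  proof
    assume one: "1 \<in> \<sigma> z"
    have "card (\<sigma> z - {1}) = 1" using c2 one fin[of z] by simp
    then obtain k where k: "\<sigma> z - {1} = {k}" by (auto simp: card_Suc_eq)
    have "k \<in> \<sigma> z" "k \<noteq> 1" using k by auto
    then have kr: "k \<in> {2..3}" using ms[of z] assms by auto
    have nk: "nn (rho k z) = 2" using nn_rho[of k z] kr assms by simp
    have rs: "rho_set rho {k} z = rho k z" by (simp add: rho_set_def)
    have np1: "new_pos {k} 1 = 1" by (rule new_pos_1[of _ 3]) (use kr in auto)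
    have "st z 1 = fl (rho 2 (rho k z)) 1"
      unfolding stay_payoff_def Let_def using k rs np1 res2[OF nk] by simp
    moreover have "fl (rho 2 (rho k z)) 1 > 0"
      using fl_pos1 nn_rho[of 2 "rho k z"] nk by simp
    moreover have "st z 1 \<le> 0" using eq_in one by simp
    ultimately show False by simp
  qed
  have "\<sigma> z \<subseteq> {2,3}"
  proof
    fix j assume j: "j \<in> \<sigma> z"
    then have "j \<in> {1..3}" "j \<noteq> 1" using ms[of z] n1 assms by auto
    then show "j \<in> {2,3}" by auto
  qed
  moreover have "card {2::nat,3} = 2" by simp
  ultimately show ?thesis using c2 by (intro card_subset_eq) auto
qed


lemma tv_real: "1 \<le> nn x \<Longrightarrow> tv x 1 = ennreal (enn2real (tv x 1)) \<and> enn2real (tv x 1) \<le> enn2real (sv x 1)"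
proof -
  assume x: "1 \<le> nn x"
  have le: "tv x 1 \<le> ennreal (enn2real (sv x 1))" using tv_le_sv[OF x] sv_real[of x 1] by simp
  then have "tv x 1 < top" using ennreal_less_top le_less_trans by blast
  then have e: "tv x 1 = ennreal (enn2real (tv x 1))" by (simp add: ennreal_enn2real_if)
  then show ?thesis using le by (metis enn2real_nonneg ennreal_le_iff)
qed

lemma contradiction: False
proof -
  obtain x0 where x0: "nn x0 = 0" using qr unfolding queuing_regime_def by blast
  define y where "y = alpha (alpha x0)"
  have ny: "nn y = 2" unfolding y_def using x0 by (simp add: nn_alpha)
  define w where "w = xi y"
  have nw: "nn w = 1" unfolding w_def using ny nn_xi[of y] by simp
  define z where "z = alpha y"
  have nz: "nn z = 3" unfolding z_def using ny by (simp add: nn_alpha)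
  define w' where "w' = rho 2 (alpha w)"
  have naw: "nn (alpha w) = 2" using nw by (simp add: nn_alpha)
  have nw': "nn w' = 1" unfolding w'_def using naw nn_rho[of 2 "alpha w"] by simp
  have sy: "\<sigma> y = {2}" using s2[OF ny] .
  have sz: "\<sigma> z = {2,3}" using s3[OF nz] .
  define j where "j = pos_after_arrival pos y 2"
  have "2 \<le> pos y" using pos2[of y] ny by simp
  moreover have "pos y \<le> 3" using qr ny unfolding queuing_regime_def by (metis numeral_3_eq_3 numeral_2_eq_2)
  ultimately have j23: "j \<in> \<sigma> z" unfolding j_def pos_after_arrival_def sz by auto
  have rz: "resolve nn \<sigma> rho z j = Gone"
    unfolding resolve_def resolve_fuel.simps(2) using j23 by simp
  have rw: "resolve nn \<sigma> rho w 1 = Flow w 1"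
    unfolding resolve_def resolve_fuel.simps(2) using s1[OF nw] by simp
  have sv_y: "sv y 2 = ennreal (1/2) * sv w 1"
    using sv_eq[of y 2] rz rw unfolding z_def w_def j_def by (simp add: cval_def)
  have tv_y: "tv y 2 = ennreal (1/2) + ennreal (1/2) * tv w 1"
    using tv_eq[of y 2] rz rw unfolding z_def w_def j_def by (simp add: cval_def)
  have sv_w: "sv w 1 = ennreal (1/2) * sv w' 1 + ennreal (1/2)"
    using sv_eq[of w 1] res2[OF naw] pa1[of w] nw unfolding w'_def by (simp add: cval_def)
  define a where "a = enn2real (sv w 1)"
  define a' where "a' = enn2real (sv w' 1)"
  define b where "b = enn2real (tv w 1)"
  have a0: "0 \<le> a" "0 \<le> a'" "0 \<le> b" unfolding a_def a'_def b_def by auto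
  have sa: "sv w 1 = ennreal a" using sv_real a_def by simp
  have sa': "sv w' 1 = ennreal a'" using sv_real a'_def by simp
  have tb: "tv w 1 = ennreal b" and ba: "b \<le> a" using tv_real[of w] nw unfolding a_def b_def by auto
  have "ennreal (1/2) \<le> ennreal a'" using sv_ge[of w'] sa' by (simp only:)
  then have a'h: "1/2 \<le> a'" using a0 by (subst (asm) ennreal_le_iff) auto
  have e1: "ennreal (1/2) * ennreal a' = ennreal (a'/2)" using a0 by (subst ennreal_mult[symmetric]) auto
  have e2: "ennreal (a'/2) + ennreal (1/2) = ennreal (a'/2 + 1/2)" using a0 by (subst ennreal_plus) auto
  have "ennreal a = ennreal (a'/2 + 1/2)"
    using sv_w unfolding sa sa' e1 e2 .
  then have aeq: "a = a'/2 + 1/2" using a0 by (subst (asm) ennreal_inj) auto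
  have e3: "ennreal (1/2) * ennreal a = ennreal (a/2)" using a0 by (subst ennreal_mult[symmetric]) auto
  have e4: "ennreal (1/2) * ennreal b = ennreal (b/2)" using a0 by (subst ennreal_mult[symmetric]) auto
  have e5: "ennreal (1/2) + ennreal (b/2) = ennreal (1/2 + b/2)" using a0 by (subst ennreal_plus) auto
  have svy: "sv y 2 = ennreal (a/2)" using sv_y unfolding sa e3 .
  have tvy: "tv y 2 = ennreal (1/2 + b/2)" using tv_y unfolding tb e4 e5 .
  have "fl y 2 = ereal (3 * (a/2) - (1/2 + b/2))" using fl_val[OF svy tvy] a0 by simp
  moreover have "3 * (a/2) - (1/2 + b/2) > 0" using aeq a'h ba by simp
  moreover have "st y 2 = fl y 2" using sy by (simp add: stay_payoff_def)
  moreover have "st y 2 \<le> 0" using eq_in sy by simp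
  ultimately show False by simp
qed

end

lemma sumk: "(\<Sum>k=0..N. real k) = real N * (real N + 1) / 2"
  by (induction N) (auto simp: field_simps)

lemma welf: "welfare 1 1 1 3 N = (3 * real N - real N * (real N + 1) / 2) / (real N + 1)"
  unfolding welfare_def Let_def by (simp add: sumk)

lemma nstar: "n_star 1 1 1 3 = 1"
  unfolding n_star_def
proof (rule Least_equality)
  show "\<forall>M. welfare 1 1 1 3 M \<le> welfare 1 1 1 3 1"
  proof
    fix M
    have "(3 * real M - real M * (real M + 1) / 2) \<le> 1 * (real M + 1)"
    proof -
      have "(real M - 1) * (real M - 2) \<ge> 0"
      proof (cases "M \<le> 1")
        case True
        then have "M = 0 \<or> M = 1" by auto
        then show ?thesis by auto
      next
        case False
        then show ?thesis by (intro mult_nonneg_nonneg) auto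
      qed
      then show ?thesis by (simp add: algebra_simps field_simps)
    qed
    then have "welfare 1 1 1 3 M \<le> 1" unfolding welf by (simp add: divide_le_eq)
    moreover have "welfare 1 1 1 3 1 = 1" unfolding welf by simp
    ultimately show "welfare 1 1 1 3 M \<le> welfare 1 1 1 3 1" by simp
  qed
next
  fix N assume "\<forall>M. welfare 1 1 1 3 M \<le> welfare 1 1 1 3 N"
  then have "welfare 1 1 1 3 1 \<le> welfare 1 1 1 3 N" by blast
  moreover have "welfare 1 1 1 3 1 = 1" "welfare 1 1 1 3 0 = 0" unfolding welf by simp_all
  ultimately show "1 \<le> N" by (cases N) auto
qed

theorem corollary1:
  fixes nn :: "'x \<Rightarrow> nat" and alpha xi :: "'x \<Rightarrow> 'x" and rho :: "nat \<Rightarrow> 'x \<Rightarrow> 'x"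
    and pos :: "'x \<Rightarrow> nat"
  assumes "queuing_regime nn alpha xi rho pos"
    and "universally_optimal nn alpha xi rho pos"
  shows "\<exists>x. 1 \<le> nn x \<and> pos x = 1"
proof (rule ccontr)
  assume "\<not> (\<exists>x. 1 \<le> nn x \<and> pos x = 1)"
  then have np: "\<And>x. 1 \<le> nn x \<Longrightarrow> pos x \<noteq> 1" by blast
  obtain \<sigma> where mpe: "markov_perfect_eq 1 1 1 3 nn alpha xi rho pos \<sigma>"
    and cd: "\<forall>x. 1 \<le> nn x \<longrightarrow> card (\<sigma> x) = nn x - n_star 1 1 1 3"
    using assms(2) unfolding universally_optimal_def
    by (metis zero_less_one zero_less_numeral)
  have ms: "\<And>x. \<sigma> x \<subseteq> {1..nn x}"
    using mpe unfolding markov_perfect_eq_def markov_strategy_def by blast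
  interpret npq2 nn alpha xi rho pos \<sigma>
    using assms(1) np ms mpe cd nstar by unfold_locales auto
  show False by (rule contradiction)
qed

end
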